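(* If $f$ satisfies the rate conditions of order $0$ and $z_1,z_2\in D$ satisfy $z_1\in J_s(z_2,1/L)$ and $f(z_1)\in J_s(f(z_2),1/L)$, then $\|\pi_y(f(z_1)-f(z_2))\|\le\mu_{s,1}\|\pi_y(z_1-z_2)\|$.
   Context: $c,u,s$ positive integers, $\Lambda=(\mathbb{R}/\mathbb{Z})^c$, $R_\Lambda=\tfrac12$; points are "in the same chart" if their $\lambda$-components have lifts to $\mathbb{R}^c$ at distance $\le R_\Lambda$; differences, norms, cones and derivatives are computed in such lifts. $\overline B_n(R)$ closed ball at $0$; Euclidean norms. $0<R<R_\Lambda/2$, $D=\Lambda\times\overline B_u(R)\times\overline B_s(R)$, $z=(\lambda,x,y)$, projections $\pi_\lambda,\pi_x,\pi_y,\pi_{(\lambda,x)}$; $f:D\to\Lambda\times\mathbb{R}^u\times\mathbb{R}^s$ is $C^1$, $f=(f_\lambda,f_x,f_y)$. $m(A)=\max\{c:\|Av\|\ge c\|v\|\}$, $m(\mathbf A)=\inf_{A\in\mathbf A}m(A)$; $[\partial g/\partial w(U)]$ = set of matrices with $(i,j)$ entry in $[\inf_U\partial g_i/\partial w_j,\sup_U\partial g_i/\partial w_j]$; $P(z)=\{w\in D:\|\pi_\lambda w-\pi_\lambda z\|\le R_\Lambda/2\}$. Fix $L\in(2R/R_\Lambda,1)$. $\mu_{s,1}=\sup_D\{\|\partial_yf_y\|+\frac1L\|\partial_{(\lambda,x)}f_y\|\}$, $\xi_{u,1,P}=\inf_{z\in D}m[\partial_xf_x(P(z))]-\frac1L\sup_D\|\partial_{(\lambda,y)}f_x\|$,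 $\mu_{cs,1}=\sup_D\{\|\partial_{(\lambda,y)}f_{(\lambda,y)}\|+L\|\partial_xf_{(\lambda,y)}\|\}$, $\xi_{cu,1,P}=\inf_{z\in D}m[\partial_{(\lambda,x)}f_{(\lambda,x)}(P(z))]-L\sup_D\|\partial_yf_{(\lambda,x)}\|$. Rate conditions of order $0$: $\mu_{s,1}<1<\xi_{u,1,P}$, $\mu_{cs,1}<\xi_{u,1,P}$, $\mu_{s,1}<\xi_{cu,1,P}$. $J_s(z,M)=\{(\lambda,x,y):\|(\lambda,x)-\pi_{(\lambda,x)}z\|\le M\|y-\pi_yz\|\}$. *)

theory Defs
  imports "HOL-Analysis.Analysis"
begin

text \<open>Points of D are represented by lifts (lambda, x, y) with lambda in R^c
  (the universal cover of the torus Lambda = (R/Z)^c).\<close>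

type_synonym ('c, 'u, 's) pt = "(real^'c) \<times> (real^'u) \<times> (real^'s)"

definition RL :: real where "RL = 1/2"

definition int_vec :: "real^'n \<Rightarrow> bool" where
  "int_vec k \<longleftrightarrow> (\<forall>i. k $ i \<in> \<int>)"

definition Dlift :: "real \<Rightarrow> ('c::finite, 'u::finite, 's::finite) pt set" where
  "Dlift R = {z. norm (fst (snd z)) \<le> R \<and> norm (snd (snd z)) \<le> R}"

text \<open>F is the lift of a map f : D -> Lambda x R^u x R^s: shifting the lambda-lift
  by an integer vector changes F only by an integer vector in the lambda-component.\<close>
definition torus_lift :: "real \<Rightarrow> (('c::finite, 'u::finite, 's::finite) pt \<Rightarrow> ('c, 'u, 's) pt) \<Rightarrow> bool" where
  "torus_lift R F \<longleftrightarrow> (\<forall>z \<in> Dlift R. \<forall>k. int_vec k \<longrightarrow>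
      (\<exists>n. int_vec n \<and> F (fst z + k, snd z) = (fst (F z) + n, snd (F z))))"

definition Pset :: "real \<Rightarrow> ('c::finite, 'u::finite, 's::finite) pt \<Rightarrow> ('c, 'u, 's) pt set" where
  "Pset R z = {w \<in> Dlift R. \<exists>k. int_vec k \<and> norm (fst w + k - fst z) \<le> RL / 2}"

text \<open>Cone J_s(z0, M); z and z0 must lie in the same chart, differences computed in lifts.\<close>
definition in_Js :: "('c::finite, 'u::finite, 's::finite) pt \<Rightarrow> ('c, 'u, 's) pt \<Rightarrow> real \<Rightarrow> bool" where
  "in_Js z z0 M \<longleftrightarrow> (\<exists>k. int_vec k \<and> norm (fst z + k - fst z0) \<le> RL \<and>
      norm (fst z + k - fst z0, fst (snd z) - fst (snd z0)) \<le> M * norm (snd (snd z) - snd (snd z0)))"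

definition min_norm :: "('a::real_normed_vector \<Rightarrow> 'b::real_normed_vector) \<Rightarrow> real" where
  "min_norm A = Sup {c. \<forall>v. c * norm v \<le> norm (A v)}"

definition interval_matrices ::
  "('p \<Rightarrow> 'a::euclidean_space \<Rightarrow> 'b::euclidean_space) \<Rightarrow> 'p set \<Rightarrow> ('a \<Rightarrow> 'b) set" where
  "interval_matrices T U = {A. linear A \<and> (\<forall>i\<in>Basis. \<forall>j\<in>Basis.
      (INF w\<in>U. T w j \<bullet> i) \<le> A j \<bullet> i \<and> A j \<bullet> i \<le> (SUP w\<in>U. T w j \<bullet> i))}"

definition min_norm_set :: "('a::real_normed_vector \<Rightarrow> 'b::real_normed_vector) set \<Rightarrow> real" where
  "min_norm_set S = (INF A\<in>S. min_norm A)"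

definition d_y_fy :: "(('c::finite, 'u::finite, 's::finite) pt \<Rightarrow> ('c, 'u, 's) pt) \<Rightarrow> real^'s \<Rightarrow> real^'s" where
  "d_y_fy A v = snd (snd (A (0, 0, v)))"
definition d_lx_fy :: "(('c::finite, 'u::finite, 's::finite) pt \<Rightarrow> ('c, 'u, 's) pt) \<Rightarrow> ((real^'c) \<times> (real^'u)) \<Rightarrow> real^'s" where
  "d_lx_fy A v = snd (snd (A (fst v, snd v, 0)))"
definition d_x_fx :: "(('c::finite, 'u::finite, 's::finite) pt \<Rightarrow> ('c, 'u, 's) pt) \<Rightarrow> real^'u \<Rightarrow> real^'u" where
  "d_x_fx A v = fst (snd (A (0, v, 0)))"
definition d_ly_fx :: "(('c::finite, 'u::finite, 's::finite) pt \<Rightarrow> ('c, 'u, 's) pt) \<Rightarrow> ((real^'c) \<times> (real^'s)) \<Rightarrow> real^'u" where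
  "d_ly_fx A v = fst (snd (A (fst v, 0, snd v)))"
definition d_ly_fly :: "(('c::finite, 'u::finite, 's::finite) pt \<Rightarrow> ('c, 'u, 's) pt) \<Rightarrow> ((real^'c) \<times> (real^'s)) \<Rightarrow> ((real^'c) \<times> (real^'s))" where
  "d_ly_fly A v = (fst (A (fst v, 0, snd v)), snd (snd (A (fst v, 0, snd v))))"
definition d_x_fly :: "(('c::finite, 'u::finite, 's::finite) pt \<Rightarrow> ('c, 'u, 's) pt) \<Rightarrow> real^'u \<Rightarrow> ((real^'c) \<times> (real^'s))" where
  "d_x_fly A v = (fst (A (0, v, 0)), snd (snd (A (0, v, 0))))"
definition d_lx_flx :: "(('c::finite, 'u::finite, 's::finite) pt \<Rightarrow> ('c, 'u, 's) pt) \<Rightarrow> ((real^'c) \<times> (real^'u)) \<Rightarrow> ((real^'c) \<times> (real^'u))" where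
  "d_lx_flx A v = (fst (A (fst v, snd v, 0)), fst (snd (A (fst v, snd v, 0))))"
definition d_y_flx :: "(('c::finite, 'u::finite, 's::finite) pt \<Rightarrow> ('c, 'u, 's) pt) \<Rightarrow> real^'s \<Rightarrow> ((real^'c) \<times> (real^'u))" where
  "d_y_flx A v = (fst (A (0, 0, v)), fst (snd (A (0, 0, v))))"

definition mu_s1 :: "(('c::finite, 'u::finite, 's::finite) pt \<Rightarrow> ('c, 'u, 's) pt \<Rightarrow> ('c, 'u, 's) pt) \<Rightarrow> real \<Rightarrow> real \<Rightarrow> real" where
  "mu_s1 DF L R = (SUP z\<in>Dlift R. onorm (d_y_fy (DF z)) + 1 / L * onorm (d_lx_fy (DF z)))"

definition xi_u1P :: "(('c::finite, 'u::finite, 's::finite) pt \<Rightarrow> ('c, 'u, 's) pt \<Rightarrow> ('c, 'u, 's) pt) \<Rightarrow> real \<Rightarrow> real \<Rightarrow> real" where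
  "xi_u1P DF L R = (INF z\<in>Dlift R. min_norm_set (interval_matrices (\<lambda>w. d_x_fx (DF w)) (Pset R z)))
      - 1 / L * (SUP z\<in>Dlift R. onorm (d_ly_fx (DF z)))"

definition mu_cs1 :: "(('c::finite, 'u::finite, 's::finite) pt \<Rightarrow> ('c, 'u, 's) pt \<Rightarrow> ('c, 'u, 's) pt) \<Rightarrow> real \<Rightarrow> real \<Rightarrow> real" where
  "mu_cs1 DF L R = (SUP z\<in>Dlift R. onorm (d_ly_fly (DF z)) + L * onorm (d_x_fly (DF z)))"

definition xi_cu1P :: "(('c::finite, 'u::finite, 's::finite) pt \<Rightarrow> ('c, 'u, 's) pt \<Rightarrow> ('c, 'u, 's) pt) \<Rightarrow> real \<Rightarrow> real \<Rightarrow> real" where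
  "xi_cu1P DF L R = (INF z\<in>Dlift R. min_norm_set (interval_matrices (\<lambda>w. d_lx_flx (DF w)) (Pset R z)))
      - L * (SUP z\<in>Dlift R. onorm (d_y_flx (DF z)))"

end

theory Submission
  imports Defs
begin


lemma Dlift_convex: "convex (Dlift R :: ('c::finite,'u::finite,'s::finite) pt set)"
  unfolding convex_def Dlift_def
proof (clarsimp)
  fix a b c a' b' c' :: "_" and u v :: real
  assume h: "norm (b::real^'u) \<le> R" "norm (c::real^'s) \<le> R" "norm (b'::real^'u) \<le> R" "norm (c'::real^'s) \<le> R"
    "0 \<le> u" "0 \<le> v" "u + v = 1"
  have "norm (u *\<^sub>R b + v *\<^sub>R b') \<le> u * norm b + v * norm b'"
    using h norm_triangle_ineq[of "u *\<^sub>R _" "v *\<^sub>R _"] by simp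
  also have "\<dots> \<le> u * R + v * R" using h by (intro add_mono mult_left_mono) auto
  finally have 1: "norm (u *\<^sub>R b + v *\<^sub>R b') \<le> R" using h by (simp add: distrib_right[symmetric])
  have "norm (u *\<^sub>R c + v *\<^sub>R c') \<le> u * norm c + v * norm c'"
    using h norm_triangle_ineq[of "u *\<^sub>R _" "v *\<^sub>R _"] by simp
  also have "\<dots> \<le> u * R + v * R" using h by (intro add_mono mult_left_mono) auto
  finally have 2: "norm (u *\<^sub>R c + v *\<^sub>R c') \<le> R" using h by (simp add: distrib_right[symmetric])
  show "norm (u *\<^sub>R b + v *\<^sub>R b') \<le> R \<and> norm (u *\<^sub>R c + v *\<^sub>R c') \<le> R" using 1 2 by simp
qed


lemma snd_snd_le: "norm (snd (snd (p::'a::real_normed_vector \<times> 'b::real_normed_vector \<times> 'c::real_normed_vector))) \<le> norm p"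
proof -
  obtain a b c where p: "p = (a,b,c)" by (cases p) auto
  have "norm c \<le> norm (b,c)" by (rule norm_snd_le)
  also have "\<dots> \<le> norm (a,b,c)" by (rule norm_snd_le)
  finally show ?thesis using p by simp
qed

lemma onorm_dyfy:
  fixes B :: "('c::finite,'u::finite,'s::finite) pt \<Rightarrow>\<^sub>L ('c,'u,'s) pt"
  shows "bounded_linear (d_y_fy (blinfun_apply B))" "onorm (d_y_fy (blinfun_apply B)) \<le> norm B"
    "bounded_linear (d_lx_fy (blinfun_apply B))" "onorm (d_lx_fy (blinfun_apply B)) \<le> norm B"
proof -
  have n1: "norm (d_y_fy (blinfun_apply B) v) \<le> norm B * norm v" for v
  proof -
    have "norm (d_y_fy (blinfun_apply B) v) \<le> norm (blinfun_apply B (0,0,v))"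
      unfolding d_y_fy_def by (rule snd_snd_le)
    also have "\<dots> \<le> norm B * norm ((0::real^'c),(0::real^'u),v)" by (rule norm_blinfun)
    also have "norm ((0::real^'c),(0::real^'u),v) = norm v" by (simp add: norm_Pair)
    finally show ?thesis .
  qed
  have n2: "norm (d_lx_fy (blinfun_apply B) v) \<le> norm B * norm v" for v
  proof -
    have "norm (d_lx_fy (blinfun_apply B) v) \<le> norm (blinfun_apply B (fst v,snd v,0))"
      unfolding d_lx_fy_def by (rule snd_snd_le)
    also have "\<dots> \<le> norm B * norm (fst v,snd v,(0::real^'s))" by (rule norm_blinfun)
    also have "norm (fst v,snd v,(0::real^'s)) = norm v" by (cases v) (simp add: norm_Pair)
    finally show ?thesis .
  qed
  show "bounded_linear (d_y_fy (blinfun_apply B))"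
  proof (rule bounded_linear_intro)
    fix x y :: "real^'s"
    have "blinfun_apply B (0,0,x+y) = blinfun_apply B (0,0,x) + blinfun_apply B (0,0,y)"
      by (simp add: blinfun.add_right[symmetric])
    then show "d_y_fy (blinfun_apply B) (x + y) = d_y_fy (blinfun_apply B) x + d_y_fy (blinfun_apply B) y"
      by (simp add: d_y_fy_def)
  next
    fix r and x :: "real^'s"
    have "blinfun_apply B (0,0,r *\<^sub>R x) = r *\<^sub>R blinfun_apply B (0,0,x)"
      by (simp add: blinfun.scaleR_right[symmetric])
    then show "d_y_fy (blinfun_apply B) (r *\<^sub>R x) = r *\<^sub>R d_y_fy (blinfun_apply B) x"
      by (simp add: d_y_fy_def)
  next
    fix x show "norm (d_y_fy (blinfun_apply B) x) \<le> norm x * norm B" using n1[of x] by (simp add: mult.commute)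
  qed
  show "bounded_linear (d_lx_fy (blinfun_apply B))"
  proof (rule bounded_linear_intro)
    fix x y :: "(real^'c) \<times> (real^'u)"
    have "blinfun_apply B (fst (x+y),snd (x+y),0) = blinfun_apply B (fst x,snd x,0) + blinfun_apply B (fst y, snd y,0)"
      by (simp add: blinfun.add_right[symmetric])
    then show "d_lx_fy (blinfun_apply B) (x + y) = d_lx_fy (blinfun_apply B) x + d_lx_fy (blinfun_apply B) y"
      by (simp add: d_lx_fy_def)
  next
    fix r and x :: "(real^'c) \<times> (real^'u)"
    have "blinfun_apply B (fst (r *\<^sub>R x),snd (r *\<^sub>R x),0) = r *\<^sub>R blinfun_apply B (fst x,snd x,0)"
      by (simp add: blinfun.scaleR_right[symmetric])
    then show "d_lx_fy (blinfun_apply B) (r *\<^sub>R x) = r *\<^sub>R d_lx_fy (blinfun_apply B) x"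
      by (simp add: d_lx_fy_def)
  next
    fix x show "norm (d_lx_fy (blinfun_apply B) x) \<le> norm x * norm B" using n2[of x] by (simp add: mult.commute)
  qed
  show "onorm (d_y_fy (blinfun_apply B)) \<le> norm B" by (rule onorm_bound) (use n1 in auto)
  show "onorm (d_lx_fy (blinfun_apply B)) \<le> norm B" by (rule onorm_bound) (use n2 in auto)
qed


lemma lift_const:
  fixes F :: "('c::finite,'u::finite,'s::finite) pt \<Rightarrow> ('c,'u,'s) pt"
  assumes R: "0 < R" and conv: "connected (Dlift R :: ('c,'u,'s) pt set)"
    and contF: "continuous_on (Dlift R) F" and lift: "torus_lift R F" and k: "int_vec k"
  shows "\<exists>n. int_vec n \<and> (\<forall>z\<in>Dlift R. F (fst z + k, snd z) = (fst (F z) + n, snd (F z)))"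
proof -
  have z0: "(0::('c,'u,'s) pt) \<in> Dlift R" using R unfolding Dlift_def by (simp add: zero_prod_def)
  have L: "\<exists>n. int_vec n \<and> F (fst z + k, snd z) = (fst (F z) + n, snd (F z))" if "z \<in> Dlift R" for z
    using lift[unfolded torus_lift_def, rule_format, OF that k] .
  define G where "G z = fst (F (fst z + k, snd z)) - fst (F z)" for z :: "('c,'u,'s) pt"
  have Gint: "G z $ i \<in> \<int>" if zD: "z \<in> Dlift R" for z i
  proof -
    obtain n where "int_vec n" "F (fst z + k, snd z) = (fst (F z) + n, snd (F z))"
      using L[OF zD] by blast
    then show ?thesis by (simp add: G_def int_vec_def)
  qed
  have sub: "(\<lambda>z. (fst z + k, snd z)) ` Dlift R \<subseteq> (Dlift R :: ('c,'u,'s) pt set)" by (auto simp: Dlift_def)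
  have contsh: "continuous_on (Dlift R) (\<lambda>z::('c,'u,'s) pt. (fst z + k, snd z))"
    by (intro continuous_intros)
  have contFs: "continuous_on (Dlift R) (\<lambda>z. F (fst z + k, snd z))"
    by (rule continuous_on_compose2[OF contF contsh sub])
  have contG: "continuous_on (Dlift R) G"
    unfolding G_def by (intro continuous_on_diff continuous_on_fst contFs contF)
  have const: "G z $ i = G 0 $ i" if zD: "z \<in> Dlift R" for z i
  proof -
    have "(\<lambda>z. G z $ i) constant_on Dlift R"
    proof (rule continuous_discrete_range_constant[OF conv])
      show "continuous_on (Dlift R) (\<lambda>z. G z $ i)" by (rule continuous_on_component[OF contG])
      fix x :: "('c,'u,'s) pt" assume x: "x \<in> Dlift R"
      show "\<exists>e>0. \<forall>y. y \<in> Dlift R \<and> G y $ i \<noteq> G x $ i \<longrightarrow> e \<le> norm (G y $ i - G x $ i)"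
      proof (intro exI[of _ 1] conjI allI impI)
        fix y :: "('c,'u,'s) pt" assume y: "y \<in> Dlift R \<and> G y $ i \<noteq> G x $ i"
        have "G y $ i - G x $ i \<in> \<int>" using Gint[OF x] Gint[of y] y by (intro Ints_diff) auto
        then show "1 \<le> norm (G y $ i - G x $ i)" using y by (simp add: Ints_nonzero_abs_ge1)
      qed simp
    qed
    then obtain c where "\<forall>x\<in>Dlift R. G x $ i = c" unfolding constant_on_def by blast
    then show ?thesis using zD z0 by simp
  qed
  from L[OF z0] obtain n0 where n0: "int_vec n0 \<and> F (fst (0::('c,'u,'s) pt) + k, snd (0::('c,'u,'s) pt)) = (fst (F 0) + n0, snd (F 0))" by (elim exE) (rule that, assumption)
  have G0: "G 0 = n0" using conjunct2[OF n0] unfolding G_def by simp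
  show ?thesis
  proof (intro exI[of _ n0] conjI ballI)
    show "int_vec n0" using n0 by simp
    fix z :: "('c,'u,'s) pt" assume z: "z \<in> Dlift R"
    from L[OF z] obtain n where nz': "int_vec n \<and> F (fst z + k, snd z) = (fst (F z) + n, snd (F z))" by (elim exE) (rule that, assumption)
    note nz = conjunct2[OF nz']
    have "G z = n0" using const[OF z] G0 by (simp add: vec_eq_iff)
    then show "F (fst z + k, snd z) = (fst (F z) + n0, snd (F z))"
      using nz by (simp add: G_def prod_eq_iff)
  qed
qed
definition Iset :: "real \<Rightarrow> ('c::finite,'u::finite,'s::finite) pt set" where
  "Iset R = {z. norm (fst (snd z)) < R \<and> norm (snd (snd z)) < R}"

lemma Iset_open: "open (Iset R)"
  unfolding Iset_def by (intro open_Collect_conj open_Collect_less continuous_intros)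

lemma Iset_sub: "Iset R \<subseteq> Dlift R"
  unfolding Iset_def Dlift_def by auto

lemma deriv_periodic:
  fixes F :: "('c::finite,'u::finite,'s::finite) pt \<Rightarrow> ('c,'u,'s) pt"
    and F' :: "('c, 'u, 's) pt \<Rightarrow> ('c, 'u, 's) pt \<Rightarrow>\<^sub>L ('c, 'u, 's) pt"
  assumes deriv: "\<forall>z\<in>(Dlift R :: ('c,'u,'s) pt set). (F has_derivative blinfun_apply (F' z)) (at z within Dlift R)"
    and eq: "\<forall>z\<in>(Dlift R :: ('c,'u,'s) pt set). F (fst z + k, snd z) = (fst (F z) + n, snd (F z))"
    and w: "w \<in> Iset R"
  shows "F' (fst w + k, snd w) = F' w"
proof -
  define c :: "('c,'u,'s) pt" where "c = (k, 0, 0)"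
  have shc: "(fst z + k, snd z) = z + c" for z :: "('c,'u,'s) pt" by (simp add: c_def prod_eq_iff)
  have dI: "(F has_derivative blinfun_apply (F' z)) (at z within Iset R)" if "z \<in> Iset R" for z
    using deriv Iset_sub that by (meson has_derivative_subset subsetD)
  have img: "(\<lambda>z. z + c) ` Iset R \<subseteq> Iset R" by (auto simp: Iset_def c_def)
  have dsh: "((\<lambda>z. z + c) has_derivative (\<lambda>y. y)) (at w within Iset R)"
    by (rule has_derivative_add_const[OF has_derivative_ident])
  have d1: "((\<lambda>z. F (z + c)) has_derivative (\<lambda>y. blinfun_apply (F' (w + c)) y)) (at w within Iset R)"
    using has_derivative_in_compose2[OF dI img w dsh] by simp
  have d1': "((\<lambda>z. F z + c') has_derivative blinfun_apply (F' (w + c))) (at w within Iset R)"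
    if "c' = (n, 0, 0)" for c'
  proof (rule has_derivative_transform[OF w _ d1[unfolded eta_contract_eq]])
    fix z :: "('c,'u,'s) pt" assume "z \<in> Iset R"
    then have zD: "z \<in> Dlift R" using Iset_sub by auto
    have e: "F (z + c) = (fst (F z) + n, snd (F z))" using bspec[OF eq zD] unfolding shc .
    show "F z + c' = F (z + c)" unfolding e that by (simp add: prod_eq_iff)
  qed
  have d2: "((\<lambda>z. F z + (n,0,0)) has_derivative blinfun_apply (F' w)) (at w within Iset R)"
    by (rule has_derivative_add_const[OF dI[OF w]])
  have "blinfun_apply (F' (w + c)) = blinfun_apply (F' w)"
    using has_derivative_unique d1'[OF refl] d2 at_within_open[OF w Iset_open] by metis
  then show ?thesis using shc[of w] by (simp add: blinfun_apply_inject)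
qed



lemma F'_bounded:
  fixes F' :: "('c::finite,'u::finite,'s::finite) pt \<Rightarrow> ('c,'u,'s) pt \<Rightarrow>\<^sub>L ('c,'u,'s) pt"
  assumes R: "0 < R" and C1: "continuous_on (Dlift R) F'"
    and per: "\<And>w k. w \<in> Iset R \<Longrightarrow> int_vec k \<Longrightarrow> F' (fst w + k, snd w) = F' w"
  shows "\<exists>M. \<forall>z\<in>Dlift R. norm (F' z) \<le> M"
proof -
  define K :: "('c,'u,'s) pt set" where "K = cbox 0 1 \<times> cball 0 R \<times> cball 0 R"
  have KD: "K \<subseteq> Dlift R" unfolding K_def Dlift_def by (auto simp: mem_Times_iff)
  have cK: "compact K" unfolding K_def by (intro compact_Times compact_cbox compact_cball)
  have "compact (F' ` K)" by (rule compact_continuous_image[OF continuous_on_subset[OF C1 KD] cK])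
  then have "bounded (F' ` K)" by (rule compact_imp_bounded)
  then obtain M where M: "\<forall>x\<in>F' ` K. norm x \<le> M" unfolding bounded_iff by blast
  have MI: "norm (F' w) \<le> M" if w: "w \<in> Iset R" for w
  proof -
    define k :: "real^'c" where "k = (\<chi> i. of_int \<lfloor>fst w $ i\<rfloor>)"
    define z :: "('c,'u,'s) pt" where "z = (fst w - k, snd w)"
    have kint: "int_vec k" unfolding int_vec_def k_def by simp
    have zI: "z \<in> Iset R" using w unfolding z_def Iset_def by simp
    have "fst z \<in> cbox 0 1"
    proof -
      have "0 \<le> fst w $ i - of_int \<lfloor>fst w $ i\<rfloor> \<and> fst w $ i - of_int \<lfloor>fst w $ i\<rfloor> \<le> 1" for i
        using of_int_floor_le[of "fst w $ i"] real_of_int_floor_add_one_gt[of "fst w $ i"] by linarith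
      then show ?thesis unfolding z_def k_def by (simp add: mem_box_cart)
    qed
    moreover have "snd z \<in> cball 0 R \<times> cball 0 R" using w unfolding z_def Iset_def by (auto simp: mem_Times_iff)
    ultimately have zK: "z \<in> K" unfolding K_def by (simp add: mem_Times_iff)
    have "F' w = F' z" using per[OF zI kint] unfolding z_def by simp
    then show ?thesis using M zK by auto
  qed
  show ?thesis
  proof (intro exI[of _ M] ballI)
    fix w :: "('c,'u,'s) pt" assume wD: "w \<in> Dlift R"
    define s :: "nat \<Rightarrow> real" where "s m = 1 - inverse (real (Suc m))" for m
    define g where "g m = (fst w, s m *\<^sub>R snd w)" for m
    have s01: "0 \<le> s m \<and> s m < 1" for m unfolding s_def by (simp add: field_simps)
    have gI: "g m \<in> Iset R" for m
    proof -
      have a: "norm (fst (snd w)) \<le> R" "norm (snd (snd w)) \<le> R" using wD unfolding Dlift_def by auto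
      have "s m * norm (fst (snd w)) \<le> s m * R" "s m * norm (snd (snd w)) \<le> s m * R"
        using a s01[of m] by (auto intro: mult_left_mono)
      moreover have "s m * R < R" using s01[of m] R by simp
      ultimately show ?thesis using s01[of m] unfolding g_def Iset_def by simp
    qed
    have slim: "s \<longlonglongrightarrow> 1"
      unfolding s_def using tendsto_diff[OF tendsto_const LIMSEQ_inverse_real_of_nat, of 1] by simp
    have glim: "g \<longlonglongrightarrow> w"
    proof -
      have "g \<longlonglongrightarrow> (fst w, 1 *\<^sub>R snd w)"
        unfolding g_def by (intro tendsto_Pair tendsto_const tendsto_scaleR slim)
      then show ?thesis by simp
    qed
    have "(\<lambda>m. norm (F' (g m))) \<longlonglongrightarrow> norm (F' w)"
      by (intro tendsto_norm continuous_on_tendsto_compose[OF C1 glim wD])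
         (use gI Iset_sub in \<open>auto intro!: always_eventually\<close>)
    moreover have "\<forall>m\<ge>0. norm (F' (g m)) \<le> M" using MI gI by auto
    ultimately show "norm (F' w) \<le> M" by (intro LIMSEQ_le_const2) auto
  qed
qed



theorem lemma4p6:
  fixes F :: "('c::finite, 'u::finite, 's::finite) pt \<Rightarrow> ('c, 'u, 's) pt"
    and F' :: "('c, 'u, 's) pt \<Rightarrow> ('c, 'u, 's) pt \<Rightarrow>\<^sub>L ('c, 'u, 's) pt"
    and R L :: real
    and z1 z2 :: "('c, 'u, 's) pt"
  assumes R_pos: "0 < R" and R_small: "R < RL / 2"
    and L_lo: "2 * R / RL < L" and L_hi: "L < 1"
    and deriv: "\<forall>z\<in>Dlift R. (F has_derivative blinfun_apply (F' z)) (at z within Dlift R)"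
    and C1: "continuous_on (Dlift R) F'"
    and lift: "torus_lift R F"
    and rate1: "mu_s1 (\<lambda>z. blinfun_apply (F' z)) L R < 1"
    and rate2: "1 < xi_u1P (\<lambda>z. blinfun_apply (F' z)) L R"
    and rate3: "mu_cs1 (\<lambda>z. blinfun_apply (F' z)) L R < xi_u1P (\<lambda>z. blinfun_apply (F' z)) L R"
    and rate4: "mu_s1 (\<lambda>z. blinfun_apply (F' z)) L R < xi_cu1P (\<lambda>z. blinfun_apply (F' z)) L R"
    and z1D: "z1 \<in> Dlift R" and z2D: "z2 \<in> Dlift R"
    and cone1: "in_Js z1 z2 (1 / L)"
    and cone2: "in_Js (F z1) (F z2) (1 / L)"
  shows "norm (snd (snd (F z1)) - snd (snd (F z2)))
           \<le> mu_s1 (\<lambda>z. blinfun_apply (F' z)) L R * norm (snd (snd z1) - snd (snd z2))"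
proof -
  have conn: "connected (Dlift R :: ('c,'u,'s) pt set)" by (rule convex_connected[OF Dlift_convex])
  have dF: "(F has_derivative blinfun_apply (F' x)) (at x within Dlift R)" if "x \<in> Dlift R" for x
    using deriv that by blast
  have contF: "continuous_on (Dlift R) F"
  proof (rule continuous_on_eq_continuous_within[THEN iffD2], intro ballI)
    fix x :: "('c,'u,'s) pt" assume "x \<in> Dlift R"
    show "continuous (at x within Dlift R) F" by (rule has_derivative_continuous[OF dF[OF \<open>x \<in> Dlift R\<close>]])
  qed
  have per: "F' (fst w + k, snd w) = F' w" if "w \<in> Iset R" "int_vec k" for w k
  proof -
    from lift_const[OF R_pos conn contF lift \<open>int_vec k\<close>] obtain n where
      n: "int_vec n \<and> (\<forall>z\<in>(Dlift R :: ('c,'u,'s) pt set). F (fst z + k, snd z) = (fst (F z) + n, snd (F z)))"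
      by (elim exE) (rule that, assumption)
    show ?thesis by (rule deriv_periodic[OF deriv conjunct2[OF n] \<open>w \<in> Iset R\<close>])
  qed
  have bnd: "\<exists>M. \<forall>z\<in>Dlift R. norm (F' z) \<le> M"
    by (rule F'_bounded[OF R_pos C1]) (rule per)
  from bnd obtain M where M: "\<forall>z\<in>Dlift R. norm (F' z) \<le> M"
    by (elim exE) (rule that, assumption)
  have Lpos: "0 < L" using L_lo R_pos unfolding RL_def by (smt (verit) divide_pos_pos)
  define mu where "mu = mu_s1 (\<lambda>z. blinfun_apply (F' z)) L R"
  have bdd: "bdd_above ((\<lambda>z. onorm (d_y_fy (blinfun_apply (F' z))) + 1 / L * onorm (d_lx_fy (blinfun_apply (F' z)))) ` Dlift R)"
  proof (rule bdd_aboveI2)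
    fix z :: "('c,'u,'s) pt" assume z: "z \<in> Dlift R"
    have "onorm (d_y_fy (blinfun_apply (F' z))) \<le> M" "onorm (d_lx_fy (blinfun_apply (F' z))) \<le> M"
      using onorm_dyfy[of "F' z"] M z by auto
    then show "onorm (d_y_fy (blinfun_apply (F' z))) + 1 / L * onorm (d_lx_fy (blinfun_apply (F' z))) \<le> M + 1 / L * M"
      using Lpos by (intro add_mono mult_left_mono) auto
  qed
  have mu_ge: "onorm (d_y_fy (blinfun_apply (F' z))) + 1 / L * onorm (d_lx_fy (blinfun_apply (F' z))) \<le> mu"
    if z: "z \<in> Dlift R" for z
    unfolding mu_def mu_s1_def by (rule cSUP_upper[OF z bdd])
  have mu0: "0 \<le> mu"
  proof -
    have "0 \<le> onorm (d_y_fy (blinfun_apply (F' z2))) + 1 / L * onorm (d_lx_fy (blinfun_apply (F' z2)))"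
      using onorm_pos_le[OF onorm_dyfy(1)[of "F' z2"]] onorm_pos_le[OF onorm_dyfy(3)[of "F' z2"]] Lpos by simp
    then show ?thesis using mu_ge[OF z2D] by linarith
  qed
  from cone1[unfolded in_Js_def] obtain k where
    k: "int_vec k \<and> norm (fst z1 + k - fst z2) \<le> RL \<and>
      norm (fst z1 + k - fst z2, fst (snd z1) - fst (snd z2)) \<le> 1 / L * norm (snd (snd z1) - snd (snd z2))"
    by (elim exE) (rule that, assumption)
  define z1' where "z1' = (fst z1 + k, snd z1)"
  have z1'D: "z1' \<in> Dlift R" using z1D unfolding z1'_def Dlift_def by simp
  from lift[unfolded torus_lift_def, rule_format, OF z1D conjunct1[OF k]] obtain n where
    n: "int_vec n \<and> F (fst z1 + k, snd z1) = (fst (F z1) + n, snd (F z1))"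
    by (elim exE) (rule that, assumption)
  have Fz1': "snd (snd (F z1')) = snd (snd (F z1))" using conjunct2[OF n] unfolding z1'_def by simp
  define h where "h = z1' - z2"
  define c where "c = norm (snd (snd z1) - snd (snd z2))"
  have hc: "snd (snd h) = snd (snd z1) - snd (snd z2)" unfolding h_def z1'_def by simp
  have hab: "(fst h, fst (snd h)) = (fst z1 + k - fst z2, fst (snd z1) - fst (snd z2))"
    unfolding h_def z1'_def by simp
  have habn: "norm (fst h, fst (snd h)) \<le> 1 / L * c" using k hab unfolding c_def by simp
  have key: "norm (snd (snd (blinfun_apply (F' w) h))) \<le> mu * c" if w: "w \<in> Dlift R" for w
  proof -
    let ?A = "blinfun_apply (F' w)"
    have hsplit: "h = (fst h, fst (snd h), 0) + (0, 0, snd (snd h))" by (simp add: prod_eq_iff)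
    have "?A h = ?A (fst h, fst (snd h), 0) + ?A (0, 0, snd (snd h))"
      by (subst hsplit) (rule blinfun.add_right)
    then have eq: "snd (snd (?A h)) = d_lx_fy ?A (fst h, fst (snd h)) + d_y_fy ?A (snd (snd h))"
      by (simp add: d_lx_fy_def d_y_fy_def)
    have "norm (snd (snd (?A h))) \<le> norm (d_lx_fy ?A (fst h, fst (snd h))) + norm (d_y_fy ?A (snd (snd h)))"
      unfolding eq by (rule norm_triangle_ineq)
    also have "\<dots> \<le> onorm (d_lx_fy ?A) * norm (fst h, fst (snd h)) + onorm (d_y_fy ?A) * norm (snd (snd h))"
      by (intro add_mono onorm onorm_dyfy)
    also have "\<dots> \<le> onorm (d_lx_fy ?A) * (1 / L * c) + onorm (d_y_fy ?A) * c"
      using habn hc onorm_pos_le[OF onorm_dyfy(3)[of "F' w"]] onorm_pos_le[OF onorm_dyfy(1)[of "F' w"]] unfolding c_def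
      by (intro add_mono mult_left_mono) auto
    also have "\<dots> = (onorm (d_y_fy ?A) + 1 / L * onorm (d_lx_fy ?A)) * c" by (simp add: algebra_simps)
    also have "\<dots> \<le> mu * c" using mu_ge[OF w] unfolding c_def by (intro mult_right_mono) auto
    finally show ?thesis .
  qed
  define \<phi> where "\<phi> t = snd (snd (F (z2 + t *\<^sub>R h)))" for t :: real
  have img: "(\<lambda>t. z2 + t *\<^sub>R h) ` {0..1} \<subseteq> Dlift R"
  proof
    fix p assume "p \<in> (\<lambda>t. z2 + t *\<^sub>R h) ` {0..1}"
    then obtain t where t: "t \<in> {0..1}" and p: "p = z2 + t *\<^sub>R h" by blast
    have "p = (1 - t) *\<^sub>R z2 + t *\<^sub>R z1'" unfolding p h_def by (simp add: algebra_simps)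
    moreover have "(1 - t) *\<^sub>R z2 + t *\<^sub>R z1' \<in> Dlift R"
      using Dlift_convex[of R] z2D z1'D t unfolding convex_def by auto
    ultimately show "p \<in> Dlift R" by simp
  qed
  have dphi: "(\<phi> has_derivative (\<lambda>s. snd (snd (blinfun_apply (F' (z2 + t *\<^sub>R h)) (s *\<^sub>R h))))) (at t within {0..1})"
    if t: "t \<in> {0..1}" for t
  proof -
    have dp: "((\<lambda>t. z2 + t *\<^sub>R h) has_derivative (\<lambda>s. s *\<^sub>R h)) (at t within {0..1})"
      by (auto intro!: derivative_eq_intros)
    have "((\<lambda>t. F (z2 + t *\<^sub>R h)) has_derivative (\<lambda>s. blinfun_apply (F' (z2 + t *\<^sub>R h)) (s *\<^sub>R h))) (at t within {0..1})"
      by (rule has_derivative_in_compose2[OF dF img t dp])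
    from has_derivative_snd[OF has_derivative_snd[OF this]] show ?thesis unfolding \<phi>_def .
  qed
  have ob: "onorm (\<lambda>s. snd (snd (blinfun_apply (F' (z2 + t *\<^sub>R h)) (s *\<^sub>R h)))) \<le> mu * c"
    if t: "t \<in> {0..1}" for t
  proof (rule onorm_bound)
    show "0 \<le> mu * c" using mu0 unfolding c_def by simp
    fix s :: real
    have wD: "z2 + t *\<^sub>R h \<in> Dlift R" using img t by blast
    have "snd (snd (blinfun_apply (F' (z2 + t *\<^sub>R h)) (s *\<^sub>R h))) = s *\<^sub>R snd (snd (blinfun_apply (F' (z2 + t *\<^sub>R h)) h))"
      by (simp add: blinfun.scaleR_right)
    then have "norm (snd (snd (blinfun_apply (F' (z2 + t *\<^sub>R h)) (s *\<^sub>R h)))) = \<bar>s\<bar> * norm (snd (snd (blinfun_apply (F' (z2 + t *\<^sub>R h)) h)))"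
      by simp
    also have "\<dots> \<le> \<bar>s\<bar> * (mu * c)" by (intro mult_left_mono key[OF wD]) auto
    finally show "norm (snd (snd (blinfun_apply (F' (z2 + t *\<^sub>R h)) (s *\<^sub>R h)))) \<le> mu * c * norm s"
      by (simp add: mult.commute)
  qed
  have "norm (\<phi> 1 - \<phi> 0) \<le> mu * c * norm (1 - (0::real))"
    by (rule differentiable_bound[OF convex_real_interval(5) dphi ob]) auto
  moreover have "\<phi> 1 = snd (snd (F z1))" unfolding \<phi>_def h_def using Fz1' by simp
  moreover have "\<phi> 0 = snd (snd (F z2))" unfolding \<phi>_def by simp
  ultimately show ?thesis unfolding mu_def c_def by simp
qed

end
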